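(* Let $(\Omega,\Sigma,\mu)$ be a finite measure space and let $X(\mu)$ be a Banach strictly rectangular function space with the subsequence property. Then: (i) If $h\in L^\infty(\mu)$ and $f\in X(\mu)$, then $hf\in X(\mu)$, $\||hf|\|\le\|h\|_\infty\||f|\|$ and $\|hf\|\le 4\|h\|_\infty\|f\|$. (ii) $X(\mu)$ is an ideal in $L^0(\mu)$: if $f\in L^0(\mu)$, $g\in X(\mu)$ and $|f|\le|g|$, then $f\in X(\mu)$. (iii) The norm of $X(\mu)$ is monotone, i.e. there is $C>0$ with $\|f\|\le C\|g\|$ whenever $f,g\in X(\mu)$, $0\le f\le g$; for such $C$, $\||g|-|h|\|\le 4C\|g-h\|$ for all $g,h\in X(\mu)$; and the map $V:X(\mu)\to X(\mu)$, $V(f)=|f|$, is continuous. (iv) $\|f\|_V:=\||f|\|$, $f\in X(\mu)$, defines a norm on $X(\mu)$ equivalent to $\|\cdot\|$, which coincides with $\|\cdot\|$ on $X(\mu)^+=\{f\in X(\mu):f\ge0\}$, and $(X(\mu),\|\cdot\|_V)$ is a Banach function space.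
   Context: $L^0(\mu)$ is the space of equivalence classes (modulo $\mu$-a.e. equality) of real $\Sigma$-measurable functions, ordered $\mu$-a.e. A Banach strictly rectangular function space is a vector subspace $X(\mu)\subseteq L^0(\mu)$ with a complete norm such that $\chi_Af\in X(\mu)$ and $\|\chi_Af\|\le\|f\|$ for all $f\in X(\mu)$, $A\in\Sigma$. Subsequence property: whenever $f_n,f\in X(\mu)$ and $f_n\to f$ in norm, some subsequence converges to $f$ $\mu$-a.e. A Banach function space is a vector subspace of $L^0(\mu)$ with a complete norm which is an ideal of $L^0(\mu)$ (if $f\in L^0(\mu)$, $g$ in the space, $|f|\le|g|$, then $f$ is in the space) and whose norm is a Riesz norm ($|f|\le|g|$ implies $\|f\|\le\|g\|$). *)

theory Defs
  imports "HOL-Probability.Probability"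
begin

text \<open>Modelling of L0(mu): elements are real measurable functions; a subspace X of L0(mu)
 is modelled as a set of measurable functions that is saturated under a.e. equality,
 and a norm on it is a function N that is invariant under a.e. equality.
 The order of L0(mu) is the a.e. order.\<close>

definition ae_compatible :: "'a measure \<Rightarrow> ('a \<Rightarrow> real) set \<Rightarrow> (('a \<Rightarrow> real) \<Rightarrow> real) \<Rightarrow> bool" where
  "ae_compatible M X N \<longleftrightarrow> X \<subseteq> borel_measurable M \<and>
     (\<forall>f g. f \<in> X \<and> g \<in> borel_measurable M \<and> (AE x in M. f x = g x) \<longrightarrow> g \<in> X \<and> N g = N f)"

definition vector_subspace_L0 :: "'a measure \<Rightarrow> ('a \<Rightarrow> real) set \<Rightarrow> bool" where
  "vector_subspace_L0 M X \<longleftrightarrow> (\<lambda>x. 0) \<in> X \<and>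
     (\<forall>f\<in>X. \<forall>g\<in>X. (\<lambda>x. f x + g x) \<in> X) \<and>
     (\<forall>f\<in>X. \<forall>c::real. (\<lambda>x. c * f x) \<in> X)"

definition is_norm_on :: "'a measure \<Rightarrow> ('a \<Rightarrow> real) set \<Rightarrow> (('a \<Rightarrow> real) \<Rightarrow> real) \<Rightarrow> bool" where
  "is_norm_on M X N \<longleftrightarrow>
     (\<forall>f\<in>X. 0 \<le> N f) \<and>
     (\<forall>f\<in>X. N f = 0 \<longleftrightarrow> (AE x in M. f x = 0)) \<and>
     (\<forall>f\<in>X. \<forall>c::real. N (\<lambda>x. c * f x) = \<bar>c\<bar> * N f) \<and>
     (\<forall>f\<in>X. \<forall>g\<in>X. N (\<lambda>x. f x + g x) \<le> N f + N g)"

definition complete_wrt :: "('a \<Rightarrow> real) set \<Rightarrow> (('a \<Rightarrow> real) \<Rightarrow> real) \<Rightarrow> bool" where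
  "complete_wrt X N \<longleftrightarrow>
     (\<forall>s::nat \<Rightarrow> 'a \<Rightarrow> real. (\<forall>n. s n \<in> X) \<and>
        (\<forall>e>0. \<exists>K. \<forall>m\<ge>K. \<forall>n\<ge>K. N (\<lambda>x. s m x - s n x) < e) \<longrightarrow>
        (\<exists>f\<in>X. (\<lambda>n. N (\<lambda>x. s n x - f x)) \<longlonglongrightarrow> 0))"

definition banach_subspace_L0 :: "'a measure \<Rightarrow> ('a \<Rightarrow> real) set \<Rightarrow> (('a \<Rightarrow> real) \<Rightarrow> real) \<Rightarrow> bool" where
  "banach_subspace_L0 M X N \<longleftrightarrow> ae_compatible M X N \<and> vector_subspace_L0 M X \<and>
     is_norm_on M X N \<and> complete_wrt X N"

definition banach_strictly_rectangular :: "'a measure \<Rightarrow> ('a \<Rightarrow> real) set \<Rightarrow> (('a \<Rightarrow> real) \<Rightarrow> real) \<Rightarrow> bool" where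
  "banach_strictly_rectangular M X N \<longleftrightarrow> banach_subspace_L0 M X N \<and>
     (\<forall>f\<in>X. \<forall>A\<in>sets M. (\<lambda>x. indicator A x * f x) \<in> X \<and> N (\<lambda>x. indicator A x * f x) \<le> N f)"

definition subsequence_property :: "'a measure \<Rightarrow> ('a \<Rightarrow> real) set \<Rightarrow> (('a \<Rightarrow> real) \<Rightarrow> real) \<Rightarrow> bool" where
  "subsequence_property M X N \<longleftrightarrow>
     (\<forall>s::nat \<Rightarrow> 'a \<Rightarrow> real. \<forall>f. (\<forall>n. s n \<in> X) \<and> f \<in> X \<and> (\<lambda>n. N (\<lambda>x. s n x - f x)) \<longlonglongrightarrow> 0 \<longrightarrow>
        (\<exists>r. strict_mono r \<and> (AE x in M. (\<lambda>n. s (r n) x) \<longlonglongrightarrow> f x)))"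

definition ideal_L0 :: "'a measure \<Rightarrow> ('a \<Rightarrow> real) set \<Rightarrow> bool" where
  "ideal_L0 M X \<longleftrightarrow> (\<forall>f g. f \<in> borel_measurable M \<and> g \<in> X \<and> (AE x in M. \<bar>f x\<bar> \<le> \<bar>g x\<bar>) \<longrightarrow> f \<in> X)"

definition riesz_norm :: "'a measure \<Rightarrow> ('a \<Rightarrow> real) set \<Rightarrow> (('a \<Rightarrow> real) \<Rightarrow> real) \<Rightarrow> bool" where
  "riesz_norm M X N \<longleftrightarrow> (\<forall>f\<in>X. \<forall>g\<in>X. (AE x in M. \<bar>f x\<bar> \<le> \<bar>g x\<bar>) \<longrightarrow> N f \<le> N g)"

definition banach_function_space :: "'a measure \<Rightarrow> ('a \<Rightarrow> real) set \<Rightarrow> (('a \<Rightarrow> real) \<Rightarrow> real) \<Rightarrow> bool" where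
  "banach_function_space M X N \<longleftrightarrow> banach_subspace_L0 M X N \<and> ideal_L0 M X \<and> riesz_norm M X N"

definition Linf :: "'a measure \<Rightarrow> ('a \<Rightarrow> real) set" where
  "Linf M = {h \<in> borel_measurable M. esssup M (\<lambda>x. ereal \<bar>h x\<bar>) < \<infinity>}"

definition Linf_norm :: "'a measure \<Rightarrow> ('a \<Rightarrow> real) \<Rightarrow> real" where
  "Linf_norm M h = real_of_ereal (max 0 (esssup M (\<lambda>x. ereal \<bar>h x\<bar>)))"

end

theory Submission
  imports Defs
begin

lemma half_pow: "c / 2 ^ Suc k = c / 2 ^ k / (2::real)"
  by simp

lemma digits:
  fixes t :: real
  assumes "0 \<le> t" "t < 1"
  shows "(\<Sum>k<n. (1/2^(k+1)) * (if odd \<lfloor>2^(k+1)*t\<rfloor> then 1 else 0)) = real_of_int \<lfloor>2^n*t\<rfloor> / 2^n"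
proof (induction n)
  case 0 then show ?case using assms by (simp add: floor_eq_iff)
next
  case (Suc n)
  define a where "a = \<lfloor>2^(Suc n)*t\<rfloor>"
  have "\<lfloor>2^n*t\<rfloor> = \<lfloor>2^(Suc n)*t / real_of_int 2\<rfloor>" by simp
  also have "\<dots> = a div 2" unfolding a_def using floor_divide_real_eq_div[of 2 "2^(Suc n)*t"] by simp
  finally have h: "\<lfloor>2^n*t\<rfloor> = a div 2" .
  have a2: "a = 2 * (a div 2) + a mod 2" by simp
  have "(if odd a then 1 else 0) = real_of_int (a mod 2)"
    by (cases "odd a") (simp_all add: odd_iff_mod_2_eq_one even_iff_mod_2_eq_zero)
  then have "real_of_int \<lfloor>2^n*t\<rfloor> / 2^n + (1/2^(n+1)) * (if odd a then 1 else 0) = real_of_int a / 2^(Suc n)"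
    unfolding h
  proof -
    assume o: "(if odd a then 1 else 0) = real_of_int (a mod 2)"
    have a2r: "real_of_int a = 2 * real_of_int (a div 2) + real_of_int (a mod 2)"
      by (metis of_int_add of_int_mult of_int_numeral div_mult_mod_eq mult.commute)
    show "real_of_int (a div 2) / 2 ^ n + 1 / 2 ^ (n + 1) * (if odd a then 1 else 0) = real_of_int a / 2 ^ Suc n"
    proof -
      have "real_of_int (a div 2) / 2 ^ n + 1 / 2 ^ (n + 1) * (if odd a then 1 else 0)
          = (2 * real_of_int (a div 2) + real_of_int (a mod 2)) / 2^Suc n"
        by (simp add: o field_simps)
      also have "\<dots> = real_of_int a / 2 ^ Suc n" by (simp only: a2r[symmetric])
      finally show ?thesis .
    qed
  qed
  then show ?case using Suc by (simp only: a_def sum.lessThan_Suc) simp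
qed



lemma floor_approx: "(\<lambda>n. real_of_int \<lfloor>2^n*t\<rfloor> / 2^n) \<longlonglongrightarrow> (t::real)"
proof -
  have "(\<lambda>n. real_of_int \<lfloor>2^n*t\<rfloor> / 2^n - t) \<longlonglongrightarrow> 0"
  proof (rule Lim_null_comparison)
    show "\<forall>\<^sub>F n in sequentially. norm (real_of_int \<lfloor>2^n*t\<rfloor> / 2^n - t) \<le> (1/2)^n"
    proof (intro always_eventually allI)
      fix n :: nat
      have p: "(0::real) < 2^n" by simp
      have "real_of_int \<lfloor>2^n*t\<rfloor> \<le> 2^n*t" "2^n*t < real_of_int \<lfloor>2^n*t\<rfloor> + 1" by linarith+
      then have "real_of_int \<lfloor>2^n*t\<rfloor> / 2^n \<le> t" "t < real_of_int \<lfloor>2^n*t\<rfloor> / 2^n + 1/2^n"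
        using p by (simp_all add: field_simps)
      then show "norm (real_of_int \<lfloor>2^n*t\<rfloor> / 2^n - t) \<le> (1/2)^n"
        by (simp add: power_one_over)
    qed
    show "(\<lambda>n. (1/2::real)^n) \<longlonglongrightarrow> 0" by (rule LIMSEQ_realpow_zero) auto
  qed
  then show ?thesis by (simp add: Lim_null[symmetric])
qed

locale bsr =
  fixes M :: "'a measure" and X :: "('a \<Rightarrow> real) set" and N :: "('a \<Rightarrow> real) \<Rightarrow> real"
  assumes R: "banach_strictly_rectangular M X N"
    and SP: "subsequence_property M X N"
begin

lemma X_meas: "f \<in> X \<Longrightarrow> f \<in> borel_measurable M"
  using R unfolding banach_strictly_rectangular_def banach_subspace_L0_def ae_compatible_def by blast

lemma ae_cong: "f \<in> X \<Longrightarrow> g \<in> borel_measurable M \<Longrightarrow> (AE x in M. f x = g x) \<Longrightarrow> g \<in> X \<and> N g = N f"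
  using R unfolding banach_strictly_rectangular_def banach_subspace_L0_def ae_compatible_def by blast

lemma zero_in: "(\<lambda>x. 0) \<in> X"
  using R unfolding banach_strictly_rectangular_def banach_subspace_L0_def vector_subspace_L0_def by blast

lemma add_in: "f \<in> X \<Longrightarrow> g \<in> X \<Longrightarrow> (\<lambda>x. f x + g x) \<in> X"
  using R unfolding banach_strictly_rectangular_def banach_subspace_L0_def vector_subspace_L0_def by blast

lemma smult_in: "f \<in> X \<Longrightarrow> (\<lambda>x. c * f x) \<in> X"
  using R unfolding banach_strictly_rectangular_def banach_subspace_L0_def vector_subspace_L0_def by blast

lemma N_nonneg: "f \<in> X \<Longrightarrow> 0 \<le> N f"
  using R unfolding banach_strictly_rectangular_def banach_subspace_L0_def is_norm_on_def by blast

lemma N_zero_iff: "f \<in> X \<Longrightarrow> N f = 0 \<longleftrightarrow> (AE x in M. f x = 0)"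
  using R unfolding banach_strictly_rectangular_def banach_subspace_L0_def is_norm_on_def by blast

lemma N_smult: "f \<in> X \<Longrightarrow> N (\<lambda>x. c * f x) = \<bar>c\<bar> * N f"
  using R unfolding banach_strictly_rectangular_def banach_subspace_L0_def is_norm_on_def by blast

lemma N_tri: "f \<in> X \<Longrightarrow> g \<in> X \<Longrightarrow> N (\<lambda>x. f x + g x) \<le> N f + N g"
  using R unfolding banach_strictly_rectangular_def banach_subspace_L0_def is_norm_on_def by blast

lemma complete: "complete_wrt X N"
  using R unfolding banach_strictly_rectangular_def banach_subspace_L0_def by blast

lemma ind: "f \<in> X \<Longrightarrow> A \<in> sets M \<Longrightarrow> (\<lambda>x. indicator A x * f x) \<in> X \<and> N (\<lambda>x. indicator A x * f x) \<le> N f"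
  using R unfolding banach_strictly_rectangular_def by blast

lemma diff_in: "f \<in> X \<Longrightarrow> g \<in> X \<Longrightarrow> (\<lambda>x. f x - g x) \<in> X"
  using add_in[of f "\<lambda>x. (-1) * g x"] smult_in[of g "-1"] by simp

lemma N_diff_sym: "f \<in> X \<Longrightarrow> g \<in> X \<Longrightarrow> N (\<lambda>x. f x - g x) = N (\<lambda>x. g x - f x)"
  using N_smult[of "\<lambda>x. g x - f x" "-1", OF diff_in] by simp

lemma series:
  assumes u: "\<And>k. u k \<in> X" and b: "\<And>k. N (u k) \<le> c / 2 ^ (k+1)"
    and Fm: "F \<in> borel_measurable M"
    and conv: "AE x in M. (\<lambda>n. \<Sum>k<n. u k x) \<longlonglongrightarrow> F x"
  shows "F \<in> X \<and> N F \<le> c"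
proof -
  define S where "S n = (\<lambda>x. \<Sum>k<n. u k x)" for n
  have c0: "0 \<le> c" using b[of 0] N_nonneg[OF u[of 0]] by simp
  have S0: "S 0 = (\<lambda>x. 0)" by (simp add: S_def)
  have SS: "S (Suc n) = (\<lambda>x. S n x + u n x)" for n by (simp add: S_def)
  have SX: "S n \<in> X" for n
    by (induction n) (auto simp: S0 SS zero_in intro!: add_in u)
  have SN: "N (S n) \<le> c - c / 2 ^ n" for n
  proof (induction n)
    case 0 then show ?case using N_zero_iff[OF zero_in] by (simp add: S0)
  next
    case (Suc n)
    have "N (S (Suc n)) \<le> N (S n) + N (u n)" unfolding SS by (rule N_tri[OF SX u])
    also have "\<dots> \<le> c - c / 2 ^ n + c / 2 ^ (n+1)" using Suc b[of n] by linarith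
    also have "\<dots> = c - c / 2 ^ Suc n" using half_pow[of c n] by simp
    finally show ?case .
  qed
  have SNc: "N (S n) \<le> c" for n proof -
    have "0 \<le> c / 2 ^ n" using c0 by simp
    then show ?thesis using SN[of n] by linarith
  qed
  have Sd: "N (\<lambda>x. S (n + d) x - S n x) \<le> c / 2 ^ n - c / 2 ^ (n + d)" for n d
  proof (induction d)
    case 0 then show ?case using N_zero_iff[OF zero_in] by simp
  next
    case (Suc d)
    have e: "(\<lambda>x. S (n + Suc d) x - S n x) = (\<lambda>x. (S (n + d) x - S n x) + u (n+d) x)"
      by (simp add: SS algebra_simps)
    have "N (\<lambda>x. S (n + Suc d) x - S n x) \<le> N (\<lambda>x. S (n + d) x - S n x) + N (u (n+d))"
      unfolding e by (rule N_tri[OF diff_in[OF SX SX] u])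
    also have "\<dots> \<le> c / 2 ^ n - c / 2 ^ (n + d) + c / 2 ^ (n + d + 1)" using Suc b[of "n+d"] by linarith
    also have "\<dots> = c / 2 ^ n - c / 2 ^ (n + Suc d)"
      using half_pow[of c "n+d"] by simp
    finally show ?case .
  qed
  have Sd2: "N (\<lambda>x. S m x - S n x) \<le> c / 2 ^ n" if "n \<le> m" for m n
  proof -
    from le_Suc_ex[OF that] obtain d where md: "m = n + d" by blast
    have "0 \<le> c / 2 ^ (n + d)" using c0 by simp
    moreover have "N (\<lambda>x. S m x - S n x) \<le> c / 2 ^ n - c / 2 ^ (n + d)" unfolding md by (rule Sd)
    ultimately show ?thesis by linarith
  qed
  have cauchy: "\<forall>e>0. \<exists>K. \<forall>m\<ge>K. \<forall>n\<ge>K. N (\<lambda>x. S m x - S n x) < e"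
  proof (intro allI impI)
    fix e :: real assume e: "e > 0"
    obtain K where K: "(1/2::real) ^ K < e / (c + 1)"
      using real_arch_pow_inv[of "e / (c+1)" "1/2::real"] e c0 by auto
    have cK: "c / 2 ^ K < e"
    proof -
      have "c / 2 ^ K \<le> (c+1) * (1/2) ^ K" by (simp add: power_one_over field_simps)
      also have "\<dots> < (c+1) * (e / (c+1))" using K c0 by (intro mult_strict_left_mono) auto
      also have "\<dots> = e" using c0 by simp
      finally show ?thesis .
    qed
    have mono: "c / 2 ^ n \<le> c / 2 ^ K" if "n \<ge> K" for n
      using c0 that by (intro divide_left_mono) (auto intro: power_increasing)
    show "\<exists>K. \<forall>m\<ge>K. \<forall>n\<ge>K. N (\<lambda>x. S m x - S n x) < e"
    proof (intro exI allI impI)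
      fix m n assume "m \<ge> K" "n \<ge> K"
      show "N (\<lambda>x. S m x - S n x) < e"
      proof (cases "n \<le> m")
        case True then show ?thesis using Sd2[of n m] mono[of n] \<open>n \<ge> K\<close> cK by linarith
      next
        case False then show ?thesis using Sd2[of m n] mono[of m] \<open>m \<ge> K\<close> cK N_diff_sym[OF SX SX, of m n] by linarith
      qed
    qed
  qed
  obtain l where lX: "l \<in> X" and ll: "(\<lambda>n. N (\<lambda>x. S n x - l x)) \<longlonglongrightarrow> 0"
    using complete cauchy SX unfolding complete_wrt_def by blast
  obtain r where r: "strict_mono r" and rl: "AE x in M. (\<lambda>n. S (r n) x) \<longlonglongrightarrow> l x"
    using SP lX ll SX unfolding subsequence_property_def by blast
  have "AE x in M. l x = F x"
    using rl conv
  proof eventually_elim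
    case (elim x)
    have "(\<lambda>n. S (r n) x) \<longlonglongrightarrow> F x"
      using LIMSEQ_subseq_LIMSEQ[OF elim(2) r] by (simp add: S_def o_def)
    then show ?case using elim(1) LIMSEQ_unique by blast
  qed
  from ae_cong[OF lX Fm this] have FX: "F \<in> X" and NF: "N F = N l" by auto
  have "N l \<le> c + N (\<lambda>x. S n x - l x)" for n
  proof -
    have e: "l = (\<lambda>x. S n x + (l x - S n x))" by simp
    have "N l \<le> N (S n) + N (\<lambda>x. l x - S n x)"
      by (subst e) (rule N_tri[OF SX diff_in[OF lX SX]])
    then show ?thesis using SNc[of n] N_diff_sym[OF SX lX, of n] by linarith
  qed
  moreover have "(\<lambda>n. c + N (\<lambda>x. S n x - l x)) \<longlonglongrightarrow> c + 0"
    by (intro tendsto_add tendsto_const ll)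
  ultimately have "N l \<le> c" by (intro LIMSEQ_le_const[where X="\<lambda>n. c + N (\<lambda>x. S n x - l x)"]) auto
  with FX NF show ?thesis by simp
qed

lemma key:
  assumes g: "g \<in> X" and pm: "\<psi> \<in> borel_measurable M"
    and p: "\<And>x. x \<in> space M \<Longrightarrow> 0 \<le> \<psi> x \<and> \<psi> x < 1"
  shows "(\<lambda>x. \<psi> x * g x) \<in> X \<and> N (\<lambda>x. \<psi> x * g x) \<le> N g"
proof -
  define B where "B j = {x \<in> space M. odd \<lfloor>2^j * \<psi> x\<rfloor>}" for j :: nat
  have Bs: "B j \<in> sets M" for j unfolding B_def using pm by measurable
  define u where "u k = (\<lambda>x. (1/2^(k+1)) * (indicator (B (k+1)) x * g x))" for k
  have uX: "u k \<in> X" for k unfolding u_def by (intro smult_in ind[OF g Bs, THEN conjunct1])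
  have uN: "N (u k) \<le> N g / 2^(k+1)" for k
  proof -
    have "N (u k) = (1/2^(k+1)) * N (\<lambda>x. indicator (B (k+1)) x * g x)"
      unfolding u_def by (subst N_smult[OF ind[OF g Bs, THEN conjunct1]]) simp
    also have "\<dots> \<le> (1/2^(k+1)) * N g" by (intro mult_left_mono ind[OF g Bs, THEN conjunct2]) simp
    finally show ?thesis by simp
  qed
  have Fm: "(\<lambda>x. \<psi> x * g x) \<in> borel_measurable M" using pm X_meas[OF g] by measurable
  have conv: "AE x in M. (\<lambda>n. \<Sum>k<n. u k x) \<longlonglongrightarrow> \<psi> x * g x"
  proof (rule AE_I2)
    fix x assume x: "x \<in> space M"
    have "(\<Sum>k<n. u k x) = (\<Sum>k<n. (1/2^(k+1)) * (if odd \<lfloor>2^(k+1)*\<psi> x\<rfloor> then 1 else 0)) * g x" for n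
      unfolding u_def sum_distrib_right by (intro sum.cong) (auto simp: B_def x indicator_def)
    also have "\<dots> n = real_of_int \<lfloor>2^n*\<psi> x\<rfloor> / 2^n * g x" for n
      by (simp only: digits[OF conjunct1[OF p[OF x]] conjunct2[OF p[OF x]]])
    finally have e: "(\<lambda>n. \<Sum>k<n. u k x) = (\<lambda>n. real_of_int \<lfloor>2^n*\<psi> x\<rfloor> / 2^n * g x)" by (rule ext)
    show "(\<lambda>n. \<Sum>k<n. u k x) \<longlonglongrightarrow> \<psi> x * g x"
      unfolding e by (intro tendsto_mult_right floor_approx)
  qed
  show ?thesis by (rule series[OF uX uN Fm conv])
qed

lemma mult01:
  assumes g: "g \<in> X" and pm: "\<phi> \<in> borel_measurable M"
    and p: "\<And>x. x \<in> space M \<Longrightarrow> 0 \<le> \<phi> x \<and> \<phi> x \<le> 1"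
  shows "(\<lambda>x. \<phi> x * g x) \<in> X \<and> N (\<lambda>x. \<phi> x * g x) \<le> N g"
proof -
  have "(\<lambda>x. \<phi> x / 2 * g x) \<in> X"
    using key[of g "\<lambda>x. \<phi> x / 2"] g pm p by fastforce
  from smult_in[OF this, of 2] have X1: "(\<lambda>x. \<phi> x * g x) \<in> X" by simp
  have NN: "(1 - e) * N (\<lambda>x. \<phi> x * g x) \<le> N g" if e: "0 < e" "e < 1" for e
  proof -
    have k: "N (\<lambda>x. (1 - e) * \<phi> x * g x) \<le> N g"
    proof (rule key[of g "\<lambda>x. (1 - e) * \<phi> x", THEN conjunct2, OF g])
      show "(\<lambda>x. (1 - e) * \<phi> x) \<in> borel_measurable M" using pm by measurable
      fix x assume x: "x \<in> space M"
      have "(1 - e) * \<phi> x \<le> (1 - e) * 1" using p[OF x] e by (intro mult_left_mono) auto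
      also have "\<dots> < 1" using e by simp
      finally have "(1 - e) * \<phi> x < 1" .
      moreover have "0 \<le> (1 - e) * \<phi> x" using p[OF x] e by simp
      ultimately show "0 \<le> (1 - e) * \<phi> x \<and> (1 - e) * \<phi> x < 1" by simp
    qed
    have "N (\<lambda>x. (1 - e) * \<phi> x * g x) = N (\<lambda>x. (1 - e) * (\<phi> x * g x))" by (simp add: mult.assoc)
    also have "\<dots> = (1 - e) * N (\<lambda>x. \<phi> x * g x)" using N_smult[OF X1, of "1 - e"] e by simp
    finally show ?thesis using k by simp
  qed
  have "N (\<lambda>x. \<phi> x * g x) \<le> N g"
  proof (rule ccontr)
    let ?a = "N (\<lambda>x. \<phi> x * g x)" and ?b = "N g"
    assume "\<not> ?a \<le> ?b"
    then have ab: "?b < ?a" by simp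
    have b0: "0 \<le> ?b" by (rule N_nonneg[OF g])
    define e where "e = (?a - ?b) / (2 * ?a)"
    have a0: "0 < ?a" using ab b0 by linarith
    have e0: "0 < e" "e < 1" using ab b0 a0 by (auto simp: e_def field_simps)
    have "(1 - e) * ?a = (?a + ?b) / 2" using a0 by (simp add: e_def field_simps)
    then have "(?a + ?b) / 2 \<le> ?b" using NN[OF e0] by simp
    then show False using ab by simp
  qed
  with X1 show ?thesis by simp
qed

lemma mult01_ae:
  assumes g: "g \<in> X" and pm: "\<phi> \<in> borel_measurable M"
    and p: "AE x in M. 0 \<le> \<phi> x \<and> \<phi> x \<le> 1"
  shows "(\<lambda>x. \<phi> x * g x) \<in> X \<and> N (\<lambda>x. \<phi> x * g x) \<le> N g"
proof -
  define \<phi>' where "\<phi>' x = max 0 (min 1 (\<phi> x))" for x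
  have m: "\<phi>' \<in> borel_measurable M" unfolding \<phi>'_def using pm by measurable
  have A: "(\<lambda>x. \<phi>' x * g x) \<in> X \<and> N (\<lambda>x. \<phi>' x * g x) \<le> N g"
    by (rule mult01[OF g m]) (auto simp: \<phi>'_def)
  have "AE x in M. \<phi>' x * g x = \<phi> x * g x" using p by eventually_elim (auto simp: \<phi>'_def)
  moreover have "(\<lambda>x. \<phi> x * g x) \<in> borel_measurable M" using pm X_meas[OF g] by measurable
  ultimately show ?thesis using ae_cong[of "\<lambda>x. \<phi>' x * g x" "\<lambda>x. \<phi> x * g x"] A by auto
qed

lemma dom_pos:
  assumes f: "f \<in> borel_measurable M" and g: "g \<in> X" and le: "AE x in M. 0 \<le> f x \<and> f x \<le> g x"
  shows "f \<in> X \<and> N f \<le> N g"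
proof -
  define \<phi> where "\<phi> x = (if g x = 0 then 0 else f x / g x)" for x
  have m: "\<phi> \<in> borel_measurable M" unfolding \<phi>_def using f X_meas[OF g] by measurable
  have "AE x in M. 0 \<le> \<phi> x \<and> \<phi> x \<le> 1" using le by eventually_elim (auto simp: \<phi>_def)
  from mult01_ae[OF g m this] have A: "(\<lambda>x. \<phi> x * g x) \<in> X \<and> N (\<lambda>x. \<phi> x * g x) \<le> N g" .
  have "AE x in M. \<phi> x * g x = f x" using le by eventually_elim (auto simp: \<phi>_def)
  then show ?thesis using ae_cong[of "\<lambda>x. \<phi> x * g x" f] A f by auto
qed

lemma dom:
  assumes f: "f \<in> borel_measurable M" and g: "g \<in> X" and le: "AE x in M. \<bar>f x\<bar> \<le> \<bar>g x\<bar>"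
  shows "f \<in> X \<and> N f \<le> 2 * N g"
proof -
  define \<phi> where "\<phi> x = (if g x = 0 then 0 else f x / g x)" for x
  have m: "\<phi> \<in> borel_measurable M" unfolding \<phi>_def using f X_meas[OF g] by measurable
  have b: "AE x in M. \<bar>\<phi> x\<bar> \<le> 1" using le by eventually_elim (auto simp: \<phi>_def abs_divide)
  have m1: "(\<lambda>x. max (\<phi> x) 0) \<in> borel_measurable M" "(\<lambda>x. max (- \<phi> x) 0) \<in> borel_measurable M"
    using m by measurable
  have "AE x in M. 0 \<le> max (\<phi> x) 0 \<and> max (\<phi> x) 0 \<le> 1" using b by eventually_elim auto
  from mult01_ae[OF g m1(1) this] have P: "(\<lambda>x. max (\<phi> x) 0 * g x) \<in> X" "N (\<lambda>x. max (\<phi> x) 0 * g x) \<le> N g" by auto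
  have "AE x in M. 0 \<le> max (- \<phi> x) 0 \<and> max (- \<phi> x) 0 \<le> 1" using b by eventually_elim auto
  from mult01_ae[OF g m1(2) this] have Q: "(\<lambda>x. max (- \<phi> x) 0 * g x) \<in> X" "N (\<lambda>x. max (- \<phi> x) 0 * g x) \<le> N g" by auto
  let ?h = "\<lambda>x. max (\<phi> x) 0 * g x + (-1) * (max (- \<phi> x) 0 * g x)"
  have hX: "?h \<in> X" by (intro add_in P smult_in Q)
  have "N ?h \<le> N (\<lambda>x. max (\<phi> x) 0 * g x) + N (\<lambda>x. (-1) * (max (- \<phi> x) 0 * g x))"
    by (rule N_tri[OF P(1) smult_in[OF Q(1)]])
  also have "\<dots> \<le> 2 * N g" using P(2) Q(2) N_smult[OF Q(1), of "-1"] by simp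
  finally have hN: "N ?h \<le> 2 * N g" .
  have "AE x in M. ?h x = f x" using le by eventually_elim (auto simp: \<phi>_def max_def field_simps)
  then show ?thesis using ae_cong[OF hX f] hN by auto
qed

lemma abs_in: "f \<in> X \<Longrightarrow> (\<lambda>x. \<bar>f x\<bar>) \<in> X \<and> N (\<lambda>x. \<bar>f x\<bar>) \<le> 2 * N f"
  by (rule dom) (auto dest: X_meas)

lemma N_le_abs: assumes "f \<in> X" shows "N f \<le> 2 * N (\<lambda>x. \<bar>f x\<bar>)"
  using dom[OF X_meas[OF assms] abs_in[OF assms, THEN conjunct1]] by auto

lemma Linf_bound:
  assumes "h \<in> Linf M"
  shows "h \<in> borel_measurable M \<and> 0 \<le> Linf_norm M h \<and> (AE x in M. \<bar>h x\<bar> \<le> Linf_norm M h)"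
proof -
  let ?E = "esssup M (\<lambda>x. ereal \<bar>h x\<bar>)"
  have hm: "h \<in> borel_measurable M" and E: "?E < \<infinity>" using assms by (auto simp: Linf_def)
  have fin: "max 0 ?E = ereal (Linf_norm M h)" unfolding Linf_norm_def
    using E by (cases "max 0 ?E") (auto simp: max_def split: if_splits)
  have c0: "0 \<le> Linf_norm M h" using fin by (metis ereal_less_eq(5) max.cobounded1)
  have "AE x in M. ereal \<bar>h x\<bar> \<le> ?E" by (rule esssup_AE)
  then have "AE x in M. \<bar>h x\<bar> \<le> Linf_norm M h"
  proof eventually_elim
    case (elim x)
    have "ereal \<bar>h x\<bar> \<le> max 0 ?E" using elim by (simp add: le_max_iff_disj)
    then show ?case unfolding fin by simp
  qed
  with hm c0 show ?thesis by simp
qed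

lemma part_i:
  assumes h: "h \<in> Linf M" and f: "f \<in> X"
  shows "(\<lambda>x. h x * f x) \<in> X \<and>
        N (\<lambda>x. \<bar>h x * f x\<bar>) \<le> Linf_norm M h * N (\<lambda>x. \<bar>f x\<bar>) \<and>
        N (\<lambda>x. h x * f x) \<le> 4 * Linf_norm M h * N f"
proof -
  let ?c = "Linf_norm M h"
  have hm: "h \<in> borel_measurable M" and c0: "0 \<le> ?c" and hb: "AE x in M. \<bar>h x\<bar> \<le> ?c"
    using Linf_bound[OF h] by auto
  have fm: "f \<in> borel_measurable M" by (rule X_meas[OF f])
  have cf: "(\<lambda>x. ?c * f x) \<in> X" by (rule smult_in[OF f])
  have "AE x in M. \<bar>h x * f x\<bar> \<le> \<bar>?c * f x\<bar>"
    using hb by eventually_elim (use c0 in \<open>auto simp: abs_mult intro: mult_right_mono\<close>)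
  from dom[OF _ cf this] hm fm have A: "(\<lambda>x. h x * f x) \<in> X" "N (\<lambda>x. h x * f x) \<le> 2 * N (\<lambda>x. ?c * f x)"
    by auto
  have "2 * N (\<lambda>x. ?c * f x) = 2 * ?c * N f" using N_smult[OF f, of ?c] c0 by simp
  also have "\<dots> \<le> 4 * ?c * N f" using c0 N_nonneg[OF f] by (intro mult_right_mono) auto
  finally have B: "N (\<lambda>x. h x * f x) \<le> 4 * ?c * N f" using A(2) by linarith
  have af: "(\<lambda>x. \<bar>f x\<bar>) \<in> X" using abs_in[OF f] by simp
  have caf: "(\<lambda>x. ?c * \<bar>f x\<bar>) \<in> X" by (rule smult_in[OF af])
  have "AE x in M. 0 \<le> \<bar>h x * f x\<bar> \<and> \<bar>h x * f x\<bar> \<le> ?c * \<bar>f x\<bar>"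
    using hb by eventually_elim (auto simp: abs_mult intro: mult_right_mono)
  from dom_pos[OF _ caf this] hm fm have "N (\<lambda>x. \<bar>h x * f x\<bar>) \<le> N (\<lambda>x. ?c * \<bar>f x\<bar>)" by auto
  also have "\<dots> = ?c * N (\<lambda>x. \<bar>f x\<bar>)" using N_smult[OF af, of ?c] c0 by simp
  finally show ?thesis using A(1) B by simp
qed

lemma ideal: "ideal_L0 M X"
  unfolding ideal_L0_def using dom by blast

lemma abs_diff: assumes g: "g \<in> X" and h: "h \<in> X"
  shows "N (\<lambda>x. \<bar>g x\<bar> - \<bar>h x\<bar>) \<le> 2 * N (\<lambda>x. g x - h x)"
proof -
  have "(\<lambda>x. \<bar>g x\<bar> - \<bar>h x\<bar>) \<in> borel_measurable M" using X_meas[OF g] X_meas[OF h] by measurable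
  moreover have "AE x in M. \<bar>\<bar>g x\<bar> - \<bar>h x\<bar>\<bar> \<le> \<bar>g x - h x\<bar>" by (simp add: abs_triangle_ineq3)
  ultimately show ?thesis using dom[OF _ diff_in[OF g h]] by blast
qed

lemma part_iii_b:
  assumes C: "C > 0" and H: "\<forall>f\<in>X. \<forall>g\<in>X. (AE x in M. 0 \<le> f x \<and> f x \<le> g x) \<longrightarrow> N f \<le> C * N g"
    and g: "g \<in> X" and h: "h \<in> X"
  shows "N (\<lambda>x. \<bar>g x\<bar> - \<bar>h x\<bar>) \<le> 4 * C * N (\<lambda>x. g x - h x)"
proof -
  let ?D = "\<lambda>x. g x - h x"
  have D: "?D \<in> X" by (rule diff_in[OF g h])
  have aD: "(\<lambda>x. \<bar>?D x\<bar>) \<in> X" using abs_in[OF D] by simp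
  show ?thesis
  proof (cases "N ?D = 0")
    case True then show ?thesis using abs_diff[OF g h] by simp
  next
    case False
    then have pos: "N ?D > 0" using N_nonneg[OF D] by simp
    have "N (\<lambda>x. \<bar>?D x\<bar>) \<noteq> 0"
    proof
      assume "N (\<lambda>x. \<bar>?D x\<bar>) = 0"
      then have "AE x in M. \<bar>?D x\<bar> = 0" using N_zero_iff[OF aD] by simp
      then have "AE x in M. ?D x = 0" by simp
      then show False using N_zero_iff[OF D] False by simp
    qed
    moreover have "N (\<lambda>x. \<bar>?D x\<bar>) \<le> C * N (\<lambda>x. \<bar>?D x\<bar>)" using H aD by auto
    moreover have "0 \<le> N (\<lambda>x. \<bar>?D x\<bar>)" by (rule N_nonneg[OF aD])
    ultimately have "1 * N (\<lambda>x. \<bar>?D x\<bar>) \<le> C * N (\<lambda>x. \<bar>?D x\<bar>)" "0 < N (\<lambda>x. \<bar>?D x\<bar>)" by simp_all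
    then have "1 \<le> C" by (rule mult_right_le_imp_le)
    then have "2 * N ?D \<le> 4 * C * N ?D" using pos by (intro mult_right_mono) auto
    then show ?thesis using abs_diff[OF g h] by linarith
  qed
qed

lemma NV_norm: "is_norm_on M X (\<lambda>f. N (\<lambda>x. \<bar>f x\<bar>))"
  unfolding is_norm_on_def
proof (intro conjI ballI allI)
  fix f assume f: "f \<in> X"
  have af: "(\<lambda>x. \<bar>f x\<bar>) \<in> X" using abs_in[OF f] by simp
  show "0 \<le> N (\<lambda>x. \<bar>f x\<bar>)" by (rule N_nonneg[OF af])
  show "N (\<lambda>x. \<bar>f x\<bar>) = 0 \<longleftrightarrow> (AE x in M. f x = 0)" using N_zero_iff[OF af] by simp
  fix c :: real
  have "N (\<lambda>x. \<bar>c * f x\<bar>) = N (\<lambda>x. \<bar>c\<bar> * \<bar>f x\<bar>)" by (simp add: abs_mult)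
  then show "N (\<lambda>x. \<bar>c * f x\<bar>) = \<bar>c\<bar> * N (\<lambda>x. \<bar>f x\<bar>)" using N_smult[OF af, of "\<bar>c\<bar>"] by simp
next
  fix f g assume f: "f \<in> X" and g: "g \<in> X"
  have af: "(\<lambda>x. \<bar>f x\<bar>) \<in> X" using abs_in[OF f] by simp
  have ag: "(\<lambda>x. \<bar>g x\<bar>) \<in> X" using abs_in[OF g] by simp
  have s: "(\<lambda>x. \<bar>f x\<bar> + \<bar>g x\<bar>) \<in> X" by (rule add_in[OF af ag])
  have "(\<lambda>x. \<bar>f x + g x\<bar>) \<in> borel_measurable M" using X_meas[OF f] X_meas[OF g] by measurable
  moreover have "AE x in M. 0 \<le> \<bar>f x + g x\<bar> \<and> \<bar>f x + g x\<bar> \<le> \<bar>f x\<bar> + \<bar>g x\<bar>" by (simp add: abs_triangle_ineq)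
  ultimately have "N (\<lambda>x. \<bar>f x + g x\<bar>) \<le> N (\<lambda>x. \<bar>f x\<bar> + \<bar>g x\<bar>)" using dom_pos[OF _ s] by blast
  also have "\<dots> \<le> N (\<lambda>x. \<bar>f x\<bar>) + N (\<lambda>x. \<bar>g x\<bar>)" by (rule N_tri[OF af ag])
  finally show "N (\<lambda>x. \<bar>f x + g x\<bar>) \<le> N (\<lambda>x. \<bar>f x\<bar>) + N (\<lambda>x. \<bar>g x\<bar>)" .
qed

lemma NV_complete: "complete_wrt X (\<lambda>f. N (\<lambda>x. \<bar>f x\<bar>))"
  unfolding complete_wrt_def
proof (intro allI impI)
  fix s :: "nat \<Rightarrow> 'a \<Rightarrow> real"
  assume a: "(\<forall>n. s n \<in> X) \<and> (\<forall>e>0. \<exists>K. \<forall>m\<ge>K. \<forall>n\<ge>K. N (\<lambda>x. \<bar>s m x - s n x\<bar>) < e)"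
  then have sX: "\<And>n. s n \<in> X" by auto
  have "\<forall>e>0. \<exists>K. \<forall>m\<ge>K. \<forall>n\<ge>K. N (\<lambda>x. s m x - s n x) < e"
  proof (intro allI impI)
    fix e :: real assume "e > 0"
    then obtain K where K: "\<forall>m\<ge>K. \<forall>n\<ge>K. N (\<lambda>x. \<bar>s m x - s n x\<bar>) < e / 2" using a by (meson half_gt_zero)
    show "\<exists>K. \<forall>m\<ge>K. \<forall>n\<ge>K. N (\<lambda>x. s m x - s n x) < e"
    proof (intro exI allI impI)
      fix m n assume "m \<ge> K" "n \<ge> K"
      then show "N (\<lambda>x. s m x - s n x) < e"
        using K N_le_abs[OF diff_in[OF sX sX], of m n] by fastforce
    qed
  qed
  then obtain f where f: "f \<in> X" and l: "(\<lambda>n. N (\<lambda>x. s n x - f x)) \<longlonglongrightarrow> 0"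
    using complete sX unfolding complete_wrt_def by blast
  have "(\<lambda>n. N (\<lambda>x. \<bar>s n x - f x\<bar>)) \<longlonglongrightarrow> 0"
  proof (rule Lim_null_comparison)
    show "\<forall>\<^sub>F n in sequentially. norm (N (\<lambda>x. \<bar>s n x - f x\<bar>)) \<le> 2 * N (\<lambda>x. s n x - f x)"
      using abs_in[OF diff_in[OF sX f]] N_nonneg[OF abs_in[OF diff_in[OF sX f], THEN conjunct1]] by auto
    show "(\<lambda>n. 2 * N (\<lambda>x. s n x - f x)) \<longlonglongrightarrow> 0" using tendsto_mult_right_zero[OF l, of 2] by simp
  qed
  with f show "\<exists>f\<in>X. (\<lambda>n. N (\<lambda>x. \<bar>s n x - f x\<bar>)) \<longlonglongrightarrow> 0" by blast
qed

end

theorem theorem3p7: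
  fixes M :: "'a measure" and X :: "('a \<Rightarrow> real) set" and N :: "('a \<Rightarrow> real) \<Rightarrow> real"
  assumes "finite_measure M"
    and "banach_strictly_rectangular M X N"
    and "subsequence_property M X N"
  shows
    \<comment> \<open>(i)\<close>
    "(\<forall>h f. h \<in> Linf M \<and> f \<in> X \<longrightarrow>
        (\<lambda>x. h x * f x) \<in> X \<and>
        N (\<lambda>x. \<bar>h x * f x\<bar>) \<le> Linf_norm M h * N (\<lambda>x. \<bar>f x\<bar>) \<and>
        N (\<lambda>x. h x * f x) \<le> 4 * Linf_norm M h * N f)
   \<and> \<comment> \<open>(ii)\<close>
    ideal_L0 M X
   \<and> \<comment> \<open>(iii)\<close>
    (\<exists>C>0. \<forall>f\<in>X. \<forall>g\<in>X. (AE x in M. 0 \<le> f x \<and> f x \<le> g x) \<longrightarrow> N f \<le> C * N g)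
   \<and> (\<forall>C>0. (\<forall>f\<in>X. \<forall>g\<in>X. (AE x in M. 0 \<le> f x \<and> f x \<le> g x) \<longrightarrow> N f \<le> C * N g) \<longrightarrow>
        (\<forall>g\<in>X. \<forall>h\<in>X. N (\<lambda>x. \<bar>g x\<bar> - \<bar>h x\<bar>) \<le> 4 * C * N (\<lambda>x. g x - h x)))
   \<and> (\<forall>f\<in>X. \<forall>e>0. \<exists>d>0. \<forall>g\<in>X. N (\<lambda>x. g x - f x) < d \<longrightarrow> N (\<lambda>x. \<bar>g x\<bar> - \<bar>f x\<bar>) < e)
   \<and> \<comment> \<open>(iv)\<close>
    is_norm_on M X (\<lambda>f. N (\<lambda>x. \<bar>f x\<bar>))
   \<and> (\<exists>a>0. \<exists>b>0. \<forall>f\<in>X. a * N f \<le> N (\<lambda>x. \<bar>f x\<bar>) \<and> N (\<lambda>x. \<bar>f x\<bar>) \<le> b * N f)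
   \<and> (\<forall>f\<in>X. (AE x in M. 0 \<le> f x) \<longrightarrow> N (\<lambda>x. \<bar>f x\<bar>) = N f)
   \<and> banach_function_space M X (\<lambda>f. N (\<lambda>x. \<bar>f x\<bar>))"
proof -
  interpret bsr M X N using assms(2,3) by unfold_locales
  have P1: "\<forall>h f. h \<in> Linf M \<and> f \<in> X \<longrightarrow>
        (\<lambda>x. h x * f x) \<in> X \<and>
        N (\<lambda>x. \<bar>h x * f x\<bar>) \<le> Linf_norm M h * N (\<lambda>x. \<bar>f x\<bar>) \<and>
        N (\<lambda>x. h x * f x) \<le> 4 * Linf_norm M h * N f"
    using part_i by blast
  have P3a: "\<exists>C>0. \<forall>f\<in>X. \<forall>g\<in>X. (AE x in M. 0 \<le> f x \<and> f x \<le> g x) \<longrightarrow> N f \<le> C * N g"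
  proof (rule exI[of _ 1], intro conjI ballI impI)
    fix f g assume "f \<in> X" "g \<in> X" "AE x in M. 0 \<le> f x \<and> f x \<le> g x"
    then show "N f \<le> 1 * N g" using dom_pos[OF X_meas] by simp
  qed simp
  have P3b: "\<forall>C>0. (\<forall>f\<in>X. \<forall>g\<in>X. (AE x in M. 0 \<le> f x \<and> f x \<le> g x) \<longrightarrow> N f \<le> C * N g) \<longrightarrow>
        (\<forall>g\<in>X. \<forall>h\<in>X. N (\<lambda>x. \<bar>g x\<bar> - \<bar>h x\<bar>) \<le> 4 * C * N (\<lambda>x. g x - h x))"
    using part_iii_b by blast
  have P3c: "\<forall>f\<in>X. \<forall>e>0. \<exists>d>0. \<forall>g\<in>X. N (\<lambda>x. g x - f x) < d \<longrightarrow> N (\<lambda>x. \<bar>g x\<bar> - \<bar>f x\<bar>) < e"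
  proof (intro ballI allI impI)
    fix f e assume f: "f \<in> X" and e: "(e::real) > 0"
    show "\<exists>d>0. \<forall>g\<in>X. N (\<lambda>x. g x - f x) < d \<longrightarrow> N (\<lambda>x. \<bar>g x\<bar> - \<bar>f x\<bar>) < e"
    proof (rule exI[of _ "e/2"], intro conjI ballI impI)
      show "0 < e/2" using e by simp
      fix g assume g: "g \<in> X" and "N (\<lambda>x. g x - f x) < e/2"
      then show "N (\<lambda>x. \<bar>g x\<bar> - \<bar>f x\<bar>) < e" using abs_diff[OF g f] by linarith
    qed
  qed
  have P4b: "\<exists>a>0. \<exists>b>0. \<forall>f\<in>X. a * N f \<le> N (\<lambda>x. \<bar>f x\<bar>) \<and> N (\<lambda>x. \<bar>f x\<bar>) \<le> b * N f"
  proof -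
    have A: "\<forall>f\<in>X. 1/2 * N f \<le> N (\<lambda>x. \<bar>f x\<bar>) \<and> N (\<lambda>x. \<bar>f x\<bar>) \<le> 2 * N f"
    proof
      fix f assume f: "f \<in> X"
      have "1/2 * N f \<le> N (\<lambda>x. \<bar>f x\<bar>)" using N_le_abs[OF f] by simp
      moreover have "N (\<lambda>x. \<bar>f x\<bar>) \<le> 2 * N f" using abs_in[OF f] by simp
      ultimately show "1/2 * N f \<le> N (\<lambda>x. \<bar>f x\<bar>) \<and> N (\<lambda>x. \<bar>f x\<bar>) \<le> 2 * N f" by simp
    qed
    show ?thesis by (rule exI[of _ "1/2"], rule conjI, simp, rule exI[of _ 2], rule conjI, simp, rule A)
  qed
  have P4c: "\<forall>f\<in>X. (AE x in M. 0 \<le> f x) \<longrightarrow> N (\<lambda>x. \<bar>f x\<bar>) = N f"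
  proof (intro ballI impI)
    fix f assume f: "f \<in> X" and "AE x in M. 0 \<le> f x"
    then have "AE x in M. f x = \<bar>f x\<bar>" by auto
    moreover have "(\<lambda>x. \<bar>f x\<bar>) \<in> borel_measurable M" using X_meas[OF f] by measurable
    ultimately show "N (\<lambda>x. \<bar>f x\<bar>) = N f" using ae_cong[OF f] by blast
  qed
  have AC: "ae_compatible M X (\<lambda>f. N (\<lambda>x. \<bar>f x\<bar>))"
    unfolding ae_compatible_def
  proof (intro conjI allI impI)
    show "X \<subseteq> borel_measurable M" using X_meas by blast
    fix f g assume a: "f \<in> X \<and> g \<in> borel_measurable M \<and> (AE x in M. f x = g x)"
    then have gX: "g \<in> X" using ae_cong by blast
    have "AE x in M. \<bar>f x\<bar> = \<bar>g x\<bar>" using a by auto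
    moreover have gm: "g \<in> borel_measurable M" using a by simp
    then have "(\<lambda>x. \<bar>g x\<bar>) \<in> borel_measurable M" by measurable
    moreover have fa: "(\<lambda>x. \<bar>f x\<bar>) \<in> X" using abs_in a by blast
    ultimately have "N (\<lambda>x. \<bar>g x\<bar>) = N (\<lambda>x. \<bar>f x\<bar>)" using ae_cong[OF fa] by blast
    then show "N (\<lambda>x. \<bar>g x\<bar>) = N (\<lambda>x. \<bar>f x\<bar>)" .
    show "g \<in> X" by (rule gX)
  qed
  have VS: "vector_subspace_L0 M X"
    using assms(2) unfolding banach_strictly_rectangular_def banach_subspace_L0_def by blast
  have RN: "riesz_norm M X (\<lambda>f. N (\<lambda>x. \<bar>f x\<bar>))"
    unfolding riesz_norm_def
  proof (intro ballI impI)
    fix f g assume f: "f \<in> X" and g: "g \<in> X" and le: "AE x in M. \<bar>f x\<bar> \<le> \<bar>g x\<bar>"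
    have "(\<lambda>x. \<bar>f x\<bar>) \<in> borel_measurable M" using X_meas[OF f] by measurable
    moreover have "AE x in M. 0 \<le> \<bar>f x\<bar> \<and> \<bar>f x\<bar> \<le> \<bar>g x\<bar>" using le by auto
    ultimately show "N (\<lambda>x. \<bar>f x\<bar>) \<le> N (\<lambda>x. \<bar>g x\<bar>)" using dom_pos abs_in[OF g] by blast
  qed
  have BFS: "banach_function_space M X (\<lambda>f. N (\<lambda>x. \<bar>f x\<bar>))"
    unfolding banach_function_space_def banach_subspace_L0_def
    using AC VS NV_norm NV_complete ideal RN by blast
  show ?thesis using P1 ideal P3a P3b P3c NV_norm P4b P4c BFS by blast
qed

end
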